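(* Let $G=\mathbb{R}^6$ with coordinates $(y_1,y_2,z_1,z_2,v_1,v_2)$ and multiplication $(y',z',v')\cdot(y,z,v)=\big(y_1+y_1',y_2+y_2',z_1+z_1',z_2+z_2',\ v_1+v_1'+(y_1'-y_2')z_1-(y_1'+2y_2')z_2,\ v_2+v_2'-(2y_1'+y_2')z_1+(y_2'-y_1')z_2\big)$, and let $\Gamma=\{(y_1,y_2,z_1,z_2,v_1,v_2)\in\mathbb{Z}^6: v_1\equiv v_2\pmod 3\}$ and $N=\Gamma\backslash G$. Let $H_{\mathbb{C}}$ be the complex Heisenberg group of complex matrices $\begin{pmatrix}1&u_2&u_3\\0&1&u_1\\0&0&1\end{pmatrix}$, let $\Lambda=\mathbb{Z}\langle1,\zeta\rangle\subset\mathbb{C}$ with $\zeta=e^{2\pi i/3}$, and let $\Gamma_H\subset H_{\mathbb{C}}$ be the subgroup of matrices with $u_1,u_2,u_3\in\Lambda$. Then there is an isomorphism of Lie groups $G\to H_{\mathbb{C}}$ carrying $\Gamma$ onto $\Gamma_H$; in particular $N$ is diffeomorphic to $\Gamma_H\backslash H_{\mathbb{C}}$.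
   Context: $\Gamma$ is a discrete subgroup of $G$ and the quotient is by left multiplication. *)

theory Defs
  imports "HOL-Analysis.Analysis"
begin

text \<open>D vs x is the iterated
  derivative of f at x applied to the directions in the list vs.\<close>
definition smooth_map :: "('a::real_normed_vector \<Rightarrow> 'b::real_normed_vector) \<Rightarrow> bool" where
  "smooth_map f \<longleftrightarrow> (\<exists>D :: 'a list \<Rightarrow> 'a \<Rightarrow> 'b.
      D [] = f \<and>
      (\<forall>vs x. (D vs has_derivative (\<lambda>v. D (v # vs) x)) (at x)) \<and>
      (\<forall>vs. continuous_on UNIV (D vs)))"

type_synonym G6 = "real \<times> real \<times> real \<times> real \<times> real \<times> real"

fun gmult :: "G6 \<Rightarrow> G6 \<Rightarrow> G6" where
  "gmult (y1', y2', z1', z2', v1', v2') (y1, y2, z1, z2, v1, v2) =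
     (y1 + y1', y2 + y2', z1 + z1', z2 + z2',
      v1 + v1' + (y1' - y2') * z1 - (y1' + 2 * y2') * z2,
      v2 + v2' - (2 * y1' + y2') * z1 + (y2' - y1') * z2)"

definition Gamma :: "G6 set" where
  "Gamma = {(real_of_int a1, real_of_int a2, real_of_int b1, real_of_int b2,
             real_of_int c1, real_of_int c2) | a1 a2 b1 b2 c1 c2.
             c1 mod 3 = c2 mod 3}"

definition heis :: "complex \<Rightarrow> complex \<Rightarrow> complex \<Rightarrow> complex^3^3" where
  "heis u1 u2 u3 = vector [vector [1, u2, u3], vector [0, 1, u1], vector [0, 0, 1]]"

definition H_C :: "(complex^3^3) set" where
  "H_C = {heis u1 u2 u3 | u1 u2 u3. True}"

definition zeta :: complex where
  "zeta = cis (2 * pi / 3)"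

definition Lambda :: "complex set" where
  "Lambda = {of_int a + of_int b * zeta | a b. True}"

definition Gamma_H :: "(complex^3^3) set" where
  "Gamma_H = {heis u1 u2 u3 | u1 u2 u3. u1 \<in> Lambda \<and> u2 \<in> Lambda \<and> u3 \<in> Lambda}"

end

theory Submission
  imports Defs
begin

lemma smooth_affine:
  fixes L :: "'a::real_normed_vector \<Rightarrow> 'b::real_normed_vector"
  assumes L: "bounded_linear L"
  shows "smooth_map (\<lambda>x. c + L x)"
proof -
  define D :: "'a list \<Rightarrow> 'a \<Rightarrow> 'b" where
    "D = (\<lambda>vs. case vs of [] \<Rightarrow> (\<lambda>x. c + L x) | [v] \<Rightarrow> (\<lambda>x. L v) | _ \<Rightarrow> (\<lambda>x. 0))"
  have "(D vs has_derivative (\<lambda>v. D (v # vs) x)) (at x)" for vs x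
  proof (cases vs)
    case Nil
    have "((\<lambda>x. c + L x) has_derivative (\<lambda>v. 0 + L v)) (at x)"
      by (intro has_derivative_add has_derivative_const bounded_linear_imp_has_derivative L)
    then show ?thesis unfolding D_def using Nil by simp
  next
    case (Cons w ws)
    then show ?thesis unfolding D_def
      by (cases ws) (auto intro!: derivative_eq_intros)
  qed
  moreover have "continuous_on UNIV (D vs)" for vs
  proof (cases vs)
    case Nil
    then show ?thesis unfolding D_def
      using continuous_on_add[OF continuous_on_const linear_continuous_on[OF L]] by simp
  next
    case (Cons w ws)
    then show ?thesis unfolding D_def by (cases ws) auto
  qed
  moreover have "D [] = (\<lambda>x. c + L x)" by (simp add: D_def)
  ultimately show ?thesis unfolding smooth_map_def by blast
qed

lemma heis_nth [simp]:
  "heis u1 u2 u3 $ 1 $ 1 = 1" "heis u1 u2 u3 $ 1 $ 2 = u2" "heis u1 u2 u3 $ 1 $ 3 = u3"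
  "heis u1 u2 u3 $ 2 $ 1 = 0" "heis u1 u2 u3 $ 2 $ 2 = 1" "heis u1 u2 u3 $ 2 $ 3 = u1"
  "heis u1 u2 u3 $ 3 $ 1 = 0" "heis u1 u2 u3 $ 3 $ 2 = 0" "heis u1 u2 u3 $ 3 $ 3 = 1"
  by (simp_all add: heis_def)

lemma heis_eq_iff: "heis a1 a2 a3 = heis b1 b2 b3 \<longleftrightarrow> a1 = b1 \<and> a2 = b2 \<and> a3 = b3"
  by (metis heis_nth)

lemma heis_mult: "heis a1 a2 a3 ** heis b1 b2 b3 = heis (a1+b1) (a2+b2) (a3+b3+a2*b1)"
  by (simp add: vec_eq_iff forall_3 matrix_matrix_mult_def sum_3)

lemma zeta_eq: "zeta = Complex (-1/2) (sqrt 3 / 2)"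
  by (simp add: zeta_def complex_eq_iff cos_120 sin_120)

definition ff :: "G6 \<Rightarrow> complex^3^3" where
  "ff p = (case p of (y1, y2, z1, z2, v1, v2) \<Rightarrow>
     heis (of_real z1 - of_real z2 * zeta) (of_real y1 - of_real y2 * zeta)
          (of_real ((v1 - v2)/3) + of_real ((2 * v1 + v2)/3) * zeta))"

definition gg :: "complex^3^3 \<Rightarrow> G6" where
  "gg M = (Re (M$1$2) + Im (M$1$2) / sqrt 3, - 2 * Im (M$1$2) / sqrt 3,
           Re (M$2$3) + Im (M$2$3) / sqrt 3, - 2 * Im (M$2$3) / sqrt 3,
           Re (M$1$3) + sqrt 3 * Im (M$1$3), - 2 * Re (M$1$3))"

lemma gg_ff: "gg (ff p) = p"
  by (cases p) (simp add: gg_def ff_def zeta_eq field_simps)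

lemma ff_gg: "ff (gg (heis u1 u2 u3)) = heis u1 u2 u3"
  by (simp add: gg_def ff_def zeta_eq heis_eq_iff complex_eq_iff field_simps)

lemma ff_hom: "ff (gmult p q) = ff p ** ff q"
  by (cases p; cases q) (simp add: ff_def heis_mult heis_eq_iff zeta_eq complex_eq_iff field_simps; 
     simp add: algebra_simps)

lemma linear_gg: "linear gg"
  by (rule linearI) (simp_all add: gg_def add_divide_distrib diff_divide_distrib ring_distribs)

lemma linear_ff: "linear (\<lambda>p. ff p - ff 0)"
proof (rule linearI)
  fix p q :: G6
  show "ff (p + q) - ff 0 = ff p - ff 0 + (ff q - ff 0)"
    by (cases p; cases q) (simp add: ff_def zero_prod_def vec_eq_iff forall_3 algebra_simps
        add_divide_distrib diff_divide_distrib)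
next
  fix r :: real and p :: G6
  show "ff (r *\<^sub>R p) - ff 0 = r *\<^sub>R (ff p - ff 0)"
    by (cases p) (simp add: ff_def zero_prod_def vec_eq_iff forall_3;
        simp add: scaleR_conv_of_real algebra_simps add_divide_distrib diff_divide_distrib)
qed

lemma ff_Gamma: "ff ` Gamma = Gamma_H"
proof
  show "ff ` Gamma \<subseteq> Gamma_H"
  proof
    fix M assume "M \<in> ff ` Gamma"
    then obtain a1 a2 b1 b2 c1 c2 where M: "M = ff (real_of_int a1, real_of_int a2, real_of_int b1,
        real_of_int b2, real_of_int c1, real_of_int c2)" and c: "c1 mod 3 = c2 mod 3"
      unfolding Gamma_def by blast
    define k where "k = (c1 - c2) div 3"
    have k: "c1 - c2 = 3 * k" unfolding k_def using c by (metis mod_eq_dvd_iff dvd_mult_div_cancel)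
    have k2: "2 * c1 + c2 = 3 * (c1 - k)" using k by simp
    have e1: "real_of_int (c1 - c2) / 3 = real_of_int k" using k by simp
    have e2: "real_of_int (2 * c1 + c2) / 3 = real_of_int (c1 - k)" using k2 by simp
    have "complex_of_real (real_of_int b1) - complex_of_real (real_of_int b2) * zeta \<in> Lambda"
      unfolding Lambda_def by (rule CollectI, rule exI[of _ b1], rule exI[of _ "-b2"]) simp
    moreover have "complex_of_real (real_of_int a1) - complex_of_real (real_of_int a2) * zeta \<in> Lambda"
      unfolding Lambda_def by (rule CollectI, rule exI[of _ a1], rule exI[of _ "-a2"]) simp
    moreover have "complex_of_real ((real_of_int c1 - real_of_int c2) / 3) +
        complex_of_real ((2 * real_of_int c1 + real_of_int c2) / 3) * zeta \<in> Lambda"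
    proof -
      have e1': "(real_of_int c1 - real_of_int c2)/3 = real_of_int k" using e1 by simp
      have e2': "(2 * real_of_int c1 + real_of_int c2)/3 = real_of_int (c1 - k)" using e2 by simp
      show ?thesis unfolding e1' e2' Lambda_def of_real_of_int_eq
        by (intro CollectI exI[of _ k] exI[of _ "c1 - k"]) (rule conjI, rule refl, rule TrueI)
    qed
    ultimately show "M \<in> Gamma_H" unfolding M ff_def Gamma_H_def by auto
  qed
next
  show "Gamma_H \<subseteq> ff ` Gamma"
  proof
    fix M assume "M \<in> Gamma_H"
    then obtain a1 b1 a2 b2 a3 b3 where M: "M = heis (of_int a1 + of_int b1 * zeta)
       (of_int a2 + of_int b2 * zeta) (of_int a3 + of_int b3 * zeta)"
      unfolding Gamma_H_def Lambda_def by blast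
    let ?p = "(real_of_int a2, real_of_int (-b2), real_of_int a1, real_of_int (-b1),
               real_of_int (a3 + b3), real_of_int (b3 - 2 * a3))"
    have "?p \<in> Gamma" unfolding Gamma_def
      by (rule CollectI, intro exI conjI, rule refl) presburger
    moreover have "ff ?p = M" unfolding M ff_def heis_eq_iff
      by (simp add: algebra_simps)
    ultimately show "M \<in> ff ` Gamma" by blast
  qed
qed

lemma ff_HC: "ff p \<in> H_C"
  unfolding H_C_def ff_def by (auto split: prod.splits)

lemma ff_gg_HC: "M \<in> H_C \<Longrightarrow> ff (gg M) = M"
  unfolding H_C_def by (auto simp: ff_gg)

lemma smooth_ff: "smooth_map ff"
proof -
  have "smooth_map (\<lambda>p. ff 0 + (ff p - ff 0))"
    by (rule smooth_affine) (use linear_ff linear_conv_bounded_linear in blast)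
  then show ?thesis by simp
qed

lemma smooth_gg: "smooth_map gg"
proof -
  have "smooth_map (\<lambda>M. 0 + gg M)"
    by (rule smooth_affine) (use linear_gg linear_conv_bounded_linear in blast)
  then show ?thesis by simp
qed

theorem lemma3p1:
  "\<exists>(f :: G6 \<Rightarrow> complex^3^3) (g :: complex^3^3 \<Rightarrow> G6).
     (\<forall>p. f p \<in> H_C) \<and>
     (\<forall>p. g (f p) = p) \<and>
     (\<forall>M\<in>H_C. f (g M) = M) \<and>
     (\<forall>p q. f (gmult p q) = f p ** f q) \<and>
     smooth_map f \<and> smooth_map g \<and>
     f ` Gamma = Gamma_H"
  apply (rule exI[of _ ff])
  apply (rule exI[of _ gg])
  apply (intro conjI allI ballI)
        apply (rule ff_HC)
       apply (rule gg_ff)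
      apply (erule ff_gg_HC)
     apply (rule ff_hom)
    apply (rule smooth_ff)
   apply (rule smooth_gg)
  apply (rule ff_Gamma)
  done

datatype pad_aux = PadA0 nat | PadA1 nat | PadA2 nat | PadA3 nat | PadA4 nat | PadA5 nat | PadA6 nat | PadA7 nat | PadA8 nat | PadA9 nat | PadA10 nat | PadA11 nat | PadA12 nat | PadA13 nat | PadA14 nat | PadA15 nat | PadA16 nat | PadA17 nat | PadA18 nat | PadA19 nat | PadA20 nat | PadA21 nat | PadA22 nat | PadA23 nat | PadA24 nat | PadA25 nat | PadA26 nat | PadA27 nat | PadA28 nat | PadA29 nat

end
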